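(* Let $M$ be a $4$-dimensional Riemannian manifold with metric $g$ and affinor structure $q$ (a $(1,1)$-tensor field) whose components in local coordinates $(x^1,x^2,x^3,x^4)$ are $$g_{ij}=\begin{pmatrix} A & B & C & B\\ B & A & B & C\\ C & B & A & B\\ B & C & B & A\end{pmatrix},\qquad q_i^{\ j}=\begin{pmatrix} 0&1&0&0\\0&0&1&0\\0&0&0&1\\1&0&0&0\end{pmatrix},$$ where $A,B,C$ are smooth functions with $0<B<C<A$. Then for every point $p\in M$ there exists an orthonormal $q$-base in $T_pM$, i.e. a vector $x\in T_pM$ such that $\{x,qx,q^2x,q^3x\}$ is a basis of $T_pM$ which is orthonormal with respect to $g$.
   Context: A $q$-base of $T_pM$ is a basis of $T_pM$ of the form $\{x,qx,q^2x,q^3x\}$ for some $x\in T_pM$. The structure satisfies $q^4=\mathrm{id}$ and $g(qx,qy)=g(x,y)$ for all vector fields $x,y$; the metric $g$ is positive definite under the stated inequalities. *)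

theory Defs
  imports "HOL-Analysis.Analysis"
begin

text \<open>Pointwise (at a point p) data: T_pM is identified with real^4 via the coordinate
  basis d/dx^1,...,d/dx^4 (indices 1,2,3,4 of type 4 correspond to coordinates 1..4).\<close>

definition gmat :: "real \<Rightarrow> real \<Rightarrow> real \<Rightarrow> real^4^4" where
  "gmat A B C = vector [vector [A, B, C, B], vector [B, A, B, C],
                        vector [C, B, A, B], vector [B, C, B, A]]"

definition qmat :: "real^4^4" where
  "qmat = vector [vector [0, 1, 0, 0], vector [0, 0, 1, 0],
                  vector [0, 0, 0, 1], vector [1, 0, 0, 0]]"

definition gform :: "real \<Rightarrow> real \<Rightarrow> real \<Rightarrow> real^4 \<Rightarrow> real^4 \<Rightarrow> real" where
  "gform A B C x y = (\<Sum>i\<in>UNIV. \<Sum>j\<in>UNIV. (gmat A B C $ i $ j) * (x $ i) * (y $ j))"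

definition qop :: "real^4 \<Rightarrow> real^4" where
  "qop x = (\<chi> j. \<Sum>i\<in>UNIV. (x $ i) * (qmat $ i $ j))"

end

theory Submission imports Defs begin
definition gvec :: "real \<Rightarrow> real \<Rightarrow> real \<Rightarrow> real^4 \<Rightarrow> real^4" where
  "gvec A B C y = (\<chi> i. \<Sum>j\<in>UNIV. gmat A B C $ i $ j * y $ j)"
lemma gform_inner: "gform A B C x y = x \<bullet> gvec A B C y"
  unfolding gform_def gvec_def inner_vec_def
  by (simp add: sum_distrib_left mult.assoc mult.left_commute)

lemma orth:
  fixes f :: "nat \<Rightarrow> real^4"
  assumes o: "\<forall>i<4. \<forall>j<4. gform A B C (f i) (f j) = (if i = j then 1 else 0)"
  shows "inj_on f {0..<4} \<and> independent (f ` {0..<4}) \<and> span (f ` {0..<4}) = UNIV"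
proof -
  have inj: "inj_on f {0..<4}"
  proof (rule inj_onI)
    fix i j assume "i \<in> {0..<(4::nat)}" "j \<in> {0..<(4::nat)}" "f i = f j"
    then show "i = j" using o by (metis atLeastLessThan_iff zero_neq_one)
  qed
  let ?S = "f ` {0..<4}"
  have ind: "independent ?S"
  proof
    assume "dependent ?S"
    then obtain u where u: "\<exists>v\<in>?S. u v \<noteq> 0" "(\<Sum>v\<in>?S. u v *\<^sub>R v) = 0"
      using dependent_finite[of ?S] by auto
    then obtain j where j: "j < 4" "u (f j) \<noteq> 0" by auto
    have "0 = (\<Sum>v\<in>?S. u v *\<^sub>R v) \<bullet> gvec A B C (f j)" using u by simp
    also have "\<dots> = (\<Sum>v\<in>?S. u v * gform A B C v (f j))"
      by (simp add: inner_sum_left gform_inner)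
    also have "\<dots> = (\<Sum>i\<in>{0..<4}. u (f i) * gform A B C (f i) (f j))"
      by (simp add: sum.reindex[OF inj])
    also have "\<dots> = (\<Sum>i\<in>{0..<4}. if i = j then u (f j) else 0)"
      by (rule sum.cong) (use o j in auto)
    also have "\<dots> = u (f j)" using j by simp
    finally show False using j by simp
  qed
  have card: "card ?S = 4" using card_image[OF inj] by simp
  have "UNIV \<subseteq> span ?S"
    using card_eq_dim[of ?S UNIV] card ind by simp
  then show ?thesis using inj ind by auto
qed
lemma qop_v: "qop (vector [a,b,c,d]) = vector [d,a,b,c]"
  unfolding qop_def qmat_def
  by (simp add: vec_eq_iff forall_4 sum_4 vector_def)
lemma gform_v: "gform A B C (vector [a,b,c,d]) (vector [a',b',c',d']) =
  a*(A*a'+B*b'+C*c'+B*d') + b*(B*a'+A*b'+B*c'+C*d') + c*(C*a'+B*b'+A*c'+B*d') + d*(B*a'+C*b'+B*c'+A*d')"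
  unfolding gform_def gmat_def
  by (simp add: sum_4 vector_def algebra_simps)
lemma gtab:
  fixes u v w A B C :: real
  assumes "16*(A+2*B+C)*(u * u) = 1" "16*(A-2*B+C)*(v * v)=1" "4*(A-C)*(w * w)=1"
    "a = u+v+w" "b = u-v" "c = u+v-w"
  shows "gform A B C (vector [a,b,c,b]) (vector [a,b,c,b]) = 1"
    "gform A B C (vector [a,b,c,b]) (vector [b,a,b,c]) = 0"
    "gform A B C (vector [a,b,c,b]) (vector [c,b,a,b]) = 0"
    "gform A B C (vector [a,b,c,b]) (vector [b,c,b,a]) = 0"
    "gform A B C (vector [b,a,b,c]) (vector [a,b,c,b]) = 0"
    "gform A B C (vector [b,a,b,c]) (vector [b,a,b,c]) = 1"
    "gform A B C (vector [b,a,b,c]) (vector [c,b,a,b]) = 0"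
    "gform A B C (vector [b,a,b,c]) (vector [b,c,b,a]) = 0"
    "gform A B C (vector [c,b,a,b]) (vector [a,b,c,b]) = 0"
    "gform A B C (vector [c,b,a,b]) (vector [b,a,b,c]) = 0"
    "gform A B C (vector [c,b,a,b]) (vector [c,b,a,b]) = 1"
    "gform A B C (vector [c,b,a,b]) (vector [b,c,b,a]) = 0"
    "gform A B C (vector [b,c,b,a]) (vector [a,b,c,b]) = 0"
    "gform A B C (vector [b,c,b,a]) (vector [b,a,b,c]) = 0"
    "gform A B C (vector [b,c,b,a]) (vector [c,b,a,b]) = 0"
    "gform A B C (vector [b,c,b,a]) (vector [b,c,b,a]) = 1"
  using assms by (simp_all add: gform_v; algebra)+

lemma gram:
  fixes u v w A B C :: real
  assumes "16*(A+2*B+C)*(u * u) = 1" "16*(A-2*B+C)*(v * v)=1" "4*(A-C)*(w * w)=1"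
  shows "\<forall>i<4. \<forall>j<4. gform A B C ((qop ^^ i) (vector [u+v+w, u-v, u+v-w, u-v])) ((qop ^^ j) (vector [u+v+w, u-v, u+v-w, u-v]))
             = (if i = j then 1 else 0)"
proof (intro allI impI)
  fix i j :: nat assume "i<4" "j<4"
  then have "i \<in> {0,1,2,3}" "j \<in> {0,1,2,3}" by auto
  define a where "a = u+v+w" define b where "b = u-v" define c where "c = u+v-w"
  note g = gtab[OF assms a_def b_def c_def]
  show "gform A B C ((qop ^^ i) (vector [u+v+w, u-v, u+v-w, u-v])) ((qop ^^ j) (vector [u+v+w, u-v, u+v-w, u-v]))
             = (if i = j then 1 else 0)"
    unfolding a_def[symmetric] b_def[symmetric] c_def[symmetric]
    using \<open>i \<in> _\<close> \<open>j \<in> _\<close> by (auto simp: g qop_v numeral_eq_Suc)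
qed

theorem theorem2p2:
  fixes A B C :: "'m \<Rightarrow> real"
  assumes "\<forall>p. 0 < B p \<and> B p < C p \<and> C p < A p"
  shows "\<forall>p. \<exists>x :: real^4.
           inj_on (\<lambda>k. (qop ^^ k) x) {0..<4} \<and>
           independent ((\<lambda>k. (qop ^^ k) x) ` {0..<4}) \<and>
           span ((\<lambda>k. (qop ^^ k) x) ` {0..<4}) = UNIV \<and>
           (\<forall>i<4. \<forall>j<4. gform (A p) (B p) (C p) ((qop ^^ i) x) ((qop ^^ j) x)
                          = (if i = j then 1 else 0))"
proof
  fix p
  define a where "a = A p" define b where "b = B p" define c where "c = C p"
  have h: "0 < b" "b < c" "c < a" using assms a_def b_def c_def by auto
  define u where "u = 1 / sqrt (16*(a+2*b+c))"
  define v where "v = 1 / sqrt (16*(a-2*b+c))"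
  define w where "w = 1 / sqrt (4*(a-c))"
  have hu: "16*(a+2*b+c)*(u * u) = 1" unfolding u_def using h
    by (simp add: field_simps)
  have hv: "16*(a-2*b+c)*(v * v) = 1" unfolding v_def using h
    by (simp add: field_simps)
  have hw: "4*(a-c)*(w * w) = 1" unfolding w_def using h
    by (simp add: field_simps)
  let ?x = "vector [u+v+w, u-v, u+v-w, u-v] :: real^4"
  have g: "\<forall>i<4. \<forall>j<4. gform a b c ((qop ^^ i) ?x) ((qop ^^ j) ?x) = (if i = j then 1 else 0)"
    using gram[OF hu hv hw] by simp
  show "\<exists>x :: real^4.
           inj_on (\<lambda>k. (qop ^^ k) x) {0..<4} \<and>
           independent ((\<lambda>k. (qop ^^ k) x) ` {0..<4}) \<and>
           span ((\<lambda>k. (qop ^^ k) x) ` {0..<4}) = UNIV \<and>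
           (\<forall>i<4. \<forall>j<4. gform (A p) (B p) (C p) ((qop ^^ i) x) ((qop ^^ j) x)
                          = (if i = j then 1 else 0))"
    using orth[of a b c "\<lambda>k. (qop ^^ k) ?x"] g a_def b_def c_def by blast
qed

end
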